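(* Fix $A\in\mathbb R$, $T>0$ and $b\ge0$. There is a constant $C=C(A,b,T)$, not depending on $\epsilon$, such that for all sufficiently small $\epsilon>0$, all $t\in[0,\epsilon^{-2}T]$ and all $x,y\in\mathbb Z_{\ge0}$, $$\mathbf p_t^R(x,y)\le C\,(1\wedge t^{-1/2})\,e^{-b|x-y|(1\wedge t^{-1/2})}.$$
   Context: Let $p_t(x)$, $x\in\mathbb Z$, denote the whole-line semi-discrete heat kernel, i.e. the solution of $\partial_tp_t(x)=\frac12\Delta p_t(x)$, $p_0(x)=1_{\{x=0\}}$, where $\Delta f(x)=f(x+1)+f(x-1)-2f(x)$. For $\epsilon>0$ let $\mu_A=1-A\epsilon$. The half-line Robin heat kernel is, for $t\ge0$ and $x,y\in\mathbb Z_{\ge0}$, $$\mathbf p_t^R(x,y)=p_t(x-y)+\mu_Ap_t(x+y+1)+(1-\mu_A^{-2})\sum_{z=2}^\infty p_t(x+y+z)\mu_A^z;$$ it is the fundamental solution of $\partial_t\mathbf p=\frac12\Delta\mathbf p$ on $\mathbb Z_{\ge0}$ with boundary condition $\mathbf p_t^R(-1,y)=\mu_A\mathbf p_t^R(0,y)$. *)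

theory Defs
  imports "HOL-Analysis.Analysis"
begin

definition srw_prob :: "nat \<Rightarrow> int \<Rightarrow> real" where
  "srw_prob n x = (if \<bar>x\<bar> \<le> int n \<and> even (int n + x)
      then real (n choose nat ((int n + x) div 2)) / 2 ^ n else 0)"

text \<open>Whole-line semi-discrete heat kernel: solution of
  d/dt p = (1/2) Laplacian p, p_0 = indicator of 0.  It is the transition kernel of
  continuous-time simple random walk with jump rate 1/2 in each direction, i.e.
  the Poisson(t) mixture of the discrete-time walk.\<close>
definition heat_kernel :: "real \<Rightarrow> int \<Rightarrow> real" where
  "heat_kernel t x = (\<Sum>n. exp (- t) * t ^ n / fact n * srw_prob n x)"

definition muA :: "real \<Rightarrow> real \<Rightarrow> real" where
  "muA A \<epsilon> = 1 - A * \<epsilon>"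

text \<open>Half-line Robin heat kernel; the sum over z \<ge> 2 is reindexed as z = k + 2.\<close>
definition robin_kernel :: "real \<Rightarrow> real \<Rightarrow> real \<Rightarrow> nat \<Rightarrow> nat \<Rightarrow> real" where
  "robin_kernel A \<epsilon> t x y =
     heat_kernel t (int x - int y)
     + muA A \<epsilon> * heat_kernel t (int x + int y + 1)
     + (1 - (muA A \<epsilon>) powi (-2)) *
         (\<Sum>k. heat_kernel t (int x + int y + int k + 2) * (muA A \<epsilon>) ^ (k + 2))"

text \<open>1 \<and> t^(-1/2), with the convention that it equals 1 at t = 0.\<close>
definition min1_invsqrt :: "real \<Rightarrow> real" where
  "min1_invsqrt t = (if t \<le> 1 then 1 else 1 / sqrt t)"

end

theory Submission
  imports Defs
begin


lemma cb_rec: "((2*r+2) choose (r+1)) * (r+1) = 2*(2*r+1)*((2*r) choose r)"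
proof -
  have a: "Suc (2*r+1) * ((2*r+1) choose r) = ((2*r+2) choose (r+1)) * Suc r"
    using Suc_times_binomial_eq[of "2*r+1" r] by simp
  have b: "Suc (2*r) * ((2*r) choose r) = ((2*r+1) choose (r+1)) * Suc r"
    using Suc_times_binomial_eq[of "2*r" r] by simp
  have c: "(2*r+1) choose (r+1) = (2*r+1) choose r"
    using binomial_symmetric[of "r+1" "2*r+1"] by simp
  from a have "((2*r+2) choose (r+1)) * (r+1) = 2*((2*r+1) choose r) * (r+1)"
    by (simp del: binomial_Suc_Suc add: algebra_simps)
  hence "((2*r+2) choose (r+1)) = 2*((2*r+1) choose r)" by (metis add_is_0 mult_right_cancel one_neq_zero)
  with b c show ?thesis by (simp del: binomial_Suc_Suc add: algebra_simps)
qed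

lemma cb_sq: "real ((2*r) choose r)^2 * (2*r+1) \<le> 16^r"
proof (induction r)
  case 0 then show ?case by simp
next
  case (Suc r)
  define c where "c = real ((2*r) choose r)"
  have e: "real ((2*r+2) choose (r+1)) = 2*(2*r+1)*c/(r+1)"
    using arg_cong[OF cb_rec[of r], of real] unfolding c_def
    by (simp add: field_simps)
  have ss: "2*Suc r = 2*r+2" "Suc r = r+1" by simp_all
  have e2: "real ((2*Suc r) choose (Suc r)) = 2*(2*r+1)*c/(r+1)"
    using e by (metis ss)
  have "real ((2*Suc r) choose (Suc r))^2 * (2*Suc r+1) = 4*((2*r+1)*(2*r+3)/(r+1)^2) * (c^2*(2*r+1))"
    unfolding e2 by (simp add: field_simps power2_eq_square)
  also have "\<dots> \<le> 4*4*(c^2*(2*r+1))"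
  proof -
    have h: "real ((2*r+1)*(2*r+3)) \<le> 4 * real ((r+1)^2)"
      by (simp add: power2_eq_square algebra_simps)
    have "real ((2*r+1)*(2*r+3)) / real ((r+1)^2) \<le> 4"
      using h by (simp add: divide_le_eq del: of_nat_mult of_nat_power)
    moreover have "c^2*(2*r+1) \<ge> 0" by simp
    ultimately show ?thesis by (intro mult_right_mono mult_left_mono; (assumption | simp))
  qed
  also have "\<dots> \<le> 16 * 16^r" using Suc.IH unfolding c_def by simp
  finally show ?case by simp
qed

lemma cb_odd: "real ((2*r+1) choose r)^2 * (2*r+2) \<le> 4*16^r"
proof -
  have a: "Suc (2*r+1) * ((2*r+1) choose r) = ((2*r+2) choose (r+1)) * Suc r"
    using Suc_times_binomial_eq[of "2*r+1" r] by simp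
  hence "((2*r+2) choose (r+1)) * (r+1) = 2*((2*r+1) choose r) * (r+1)"
    by (simp del: binomial_Suc_Suc add: algebra_simps)
  hence "((2*r+2) choose (r+1)) = 2*((2*r+1) choose r)" by (metis add_is_0 mult_right_cancel one_neq_zero)
  hence e: "real ((2*r+1) choose r) = real ((2*(r+1)) choose (r+1)) / 2" by simp
  have "real ((2*r+1) choose r)^2 * (2*r+2) \<le> real ((2*(r+1)) choose (r+1))^2 * (2*(r+1)+1) / 4"
    unfolding e by (simp add: field_simps power2_eq_square)
  also have "\<dots> \<le> 16^(r+1)/4" using cb_sq[of "r+1"] by (simp del: mult_Suc_right)
  finally show ?thesis by simp
qed

lemma binom_max_sq: "real (m choose j)^2 * (m+1) \<le> 4^m"
proof -
  have mx: "m choose j \<le> m choose (m div 2)" by (rule binomial_maximum)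
  have "real (m choose j)^2 * (m+1) \<le> real (m choose (m div 2))^2 * (m+1)"
    using mx by (intro mult_right_mono power_mono) auto
  also have "\<dots> \<le> 4^m"
  proof (cases "even m")
    case True
    then obtain r where r: "m = 2*r" by blast
    have "(4::real)^m = 16^r" unfolding r by (simp add: power_mult)
    then show ?thesis using cb_sq[of r] r by simp
  next
    case False
    then obtain r where r: "m = 2*r+1" using oddE by blast
    have "(4::real)^m = 4*16^r" unfolding r by (simp add: power_mult)
    moreover have "m div 2 = r" using r by simp
    ultimately show ?thesis using cb_odd[of r] r by (simp add: add.commute)
  qed
  finally show ?thesis .
qed

lemma binom_max: "real (m choose j) \<le> 2^m / sqrt (m+1)"
proof -
  have "real (m choose j) * sqrt (m+1) = sqrt (real (m choose j)^2 * (m+1))"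
    by (simp add: real_sqrt_mult)
  also have "\<dots> \<le> sqrt (4^m)" using binom_max_sq by (simp)
  also have "\<dots> = 2^m"
  proof -
    have "(4::real)^m = 2^m * 2^m" by (simp add: power_mult_distrib[symmetric])
    then show ?thesis by simp
  qed
  finally show ?thesis by (simp add: field_simps)
qed



lemma binom_exp_full: "(\<Sum>i\<le>m. real (m choose i) * exp (l * (2 * real i - real m))) = (2 * cosh l)^m"
proof -
  have "2 * cosh l = exp l + exp (-l)" by (simp add: cosh_field_def)
  hence "(2 * cosh l)^m = (exp l + exp (-l))^m" by simp
  also have "\<dots> = (\<Sum>i\<le>m. real (m choose i) * exp l ^ i * exp (-l) ^ (m - i))"
    by (rule binomial_ring)
  also have "\<dots> = (\<Sum>i\<le>m. real (m choose i) * exp (l * (2 * real i - real m)))"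
  proof (rule sum.cong[OF refl])
    fix i assume "i \<in> {..m}"
    hence im: "i \<le> m" by simp
    have "exp l ^ i * exp (-l) ^ (m - i) = exp (real i * l) * exp (real (m - i) * (-l))"
      by (simp only: exp_of_nat_mult)
    also have "\<dots> = exp (l * (2 * real i - real m))"
      using im by (simp add: exp_add[symmetric] of_nat_diff algebra_simps)
    finally show "real (m choose i) * exp l ^ i * exp (-l) ^ (m - i) = real (m choose i) * exp (l * (2 * real i - real m))"
      by simp
  qed
  finally show ?thesis by simp
qed

lemma chernoff:
  assumes "0 \<le> l"
  shows "(\<Sum>i\<le>N. real (m choose i) * exp (l * \<bar>2 * real i - real m\<bar>)) \<le> 2 * (2 * cosh l)^m"
proof -
  define g where "g i = real (m choose i) * (exp (l * (2 * real i - real m)) + exp ((-l) * (2 * real i - real m)))" for i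
  have g0: "g i \<ge> 0" for i unfolding g_def by simp
  have "(\<Sum>i\<le>N. real (m choose i) * exp (l * \<bar>2 * real i - real m\<bar>)) \<le> (\<Sum>i\<le>N. g i)"
  proof (rule sum_mono)
    fix i
    have "exp (l * \<bar>2 * real i - real m\<bar>) \<le> exp (l * (2 * real i - real m)) + exp ((-l) * (2 * real i - real m))"
    proof (cases "2 * real i - real m \<ge> 0")
      case True then show ?thesis by (simp add: add_increasing2)
    next
      case False
      have "exp (l * \<bar>2 * real i - real m\<bar>) = exp ((-l) * (2 * real i - real m))"
        using False by (simp add: algebra_simps)
      then show ?thesis using exp_ge_zero[of "l * (2 * real i - real m)"] by linarith
    qed
    then show "real (m choose i) * exp (l * \<bar>2 * real i - real m\<bar>) \<le> g i"
      unfolding g_def by (intro mult_left_mono) auto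
  qed
  also have "\<dots> \<le> (\<Sum>i\<le>max N m. g i)"
    by (rule sum_mono2) (auto simp: g0)
  also have "\<dots> = (\<Sum>i\<le>m. g i)"
    by (rule sum.mono_neutral_right) (auto simp: g_def)
  also have "\<dots> = (2 * cosh l)^m + (2 * cosh (-l))^m"
  proof -
    have e1: "(\<Sum>i\<le>m. real (m choose i) * exp (l * (2 * real i - real m))) = (2 * cosh l)^m"
      by (rule binom_exp_full)
    have e2: "(\<Sum>i\<le>m. real (m choose i) * exp ((-l) * (2 * real i - real m))) = (2 * cosh (-l))^m"
      by (rule binom_exp_full)
    show ?thesis unfolding g_def distrib_left sum.distrib e1 e2 ..
  qed
  also have "\<dots> = 2 * (2 * cosh l)^m" by simp
  finally show ?thesis .
qed



lemma binom_max2: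
  assumes "n + 1 \<le> 2 * (m + 1)"
  shows "real (m choose j) \<le> sqrt 2 * 2^m / sqrt (real n + 1)"
proof -
  have h: "real (n+1) \<le> real (2*(m+1))" using assms by (simp only: of_nat_le_iff)
  have "sqrt (real n + 1) \<le> sqrt (2 * (real m + 1))"
    using h by (intro real_sqrt_le_mono) simp
  also have "\<dots> = sqrt 2 * sqrt (real m + 1)" by (simp only: real_sqrt_mult)
  finally have s: "sqrt (real n + 1) \<le> sqrt 2 * sqrt (real m + 1)" .
  have "real (m choose j) \<le> 2^m / sqrt (real m + 1)" using binom_max[of m j] by (simp add: add.commute)
  also have "\<dots> \<le> sqrt 2 * 2^m / sqrt (real n + 1)"
    using s by (simp add: field_simps)
  finally show ?thesis .
qed

lemma half_or:
  fixes X Y Z l :: real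
  assumes "X \<le> Y + Z" "0 \<le> l"
  shows "l * X / 2 \<le> l * Y \<or> l * X / 2 \<le> l * Z"
proof (cases "Z \<le> Y")
  case True
  hence "X / 2 \<le> Y" using assms by simp
  hence "l * (X / 2) \<le> l * Y" using assms by (intro mult_left_mono) auto
  thus ?thesis by simp
next
  case False
  hence "X / 2 \<le> Z" using assms by simp
  hence "l * (X / 2) \<le> l * Z" using assms by (intro mult_left_mono) auto
  thus ?thesis by simp
qed

lemma split_bound:
  assumes kn: "k \<le> n" and l: "0 \<le> l"
  shows "real (n choose k) * exp (l * \<bar>2 * real k - real n\<bar> / 2)
          \<le> 4 * sqrt 2 * 2^n * cosh l ^ n / sqrt (real n + 1)"
proof -
  define n1 where "n1 = n div 2"
  define n2 where "n2 = n - n1"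
  have nn: "n = n1 + n2" unfolding n1_def n2_def by simp
  have b1: "n + 1 \<le> 2 * (n1 + 1)" unfolding n1_def by presburger
  have b2: "n + 1 \<le> 2 * (n2 + 1)" unfolding n2_def n1_def by presburger
  define a where "a = l * \<bar>2 * real k - real n\<bar> / 2"
  define e1 where "e1 j = exp (l * \<bar>2 * real j - real n1\<bar>)" for j
  define e2 where "e2 j = exp (l * \<bar>2 * real j - real n2\<bar>)" for j
  define M1 where "M1 = sqrt 2 * 2^n1 / sqrt (real n + 1)"
  define M2 where "M2 = sqrt 2 * 2^n2 / sqrt (real n + 1)"
  have M1: "real (n1 choose j) \<le> M1" for j unfolding M1_def using binom_max2[OF b1] .
  have M2: "real (n2 choose j) \<le> M2" for j unfolding M2_def using binom_max2[OF b2] .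
  have pt: "exp a \<le> e1 j + e2 (k - j)" if "j \<le> k" for j
  proof -
    have "\<bar>2 * real k - real n\<bar> \<le> \<bar>2 * real j - real n1\<bar> + \<bar>2 * real (k - j) - real n2\<bar>"
      using that nn by (simp add: of_nat_diff)
    hence "a \<le> l * \<bar>2 * real j - real n1\<bar> \<or> a \<le> l * \<bar>2 * real (k - j) - real n2\<bar>"
      unfolding a_def using l
      by (rule half_or)
    thus ?thesis
    proof (elim disjE)
      assume "a \<le> l * \<bar>2 * real j - real n1\<bar>"
      hence "exp a \<le> exp (l * \<bar>2 * real j - real n1\<bar>)" by simp
      thus ?thesis unfolding e1_def e2_def using exp_ge_zero[of "l * \<bar>2 * real (k - j) - real n2\<bar>"] by linarith
    next
      assume "a \<le> l * \<bar>2 * real (k - j) - real n2\<bar>"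
      hence "exp a \<le> exp (l * \<bar>2 * real (k - j) - real n2\<bar>)" by simp
      thus ?thesis unfolding e1_def e2_def using exp_ge_zero[of "l * \<bar>2 * real j - real n1\<bar>"] by linarith
    qed
  qed
  have r0: "(\<Sum>j\<le>k. real (n2 choose (k - j)) * e2 (k - j) * M1) = (\<Sum>i\<le>k. real (n2 choose i) * e2 i * M1)"
  proof -
    have "(\<Sum>j\<in>{0..k}. real (n2 choose (k - j)) * e2 (k - j) * M1) = (\<Sum>i\<in>{0..k}. real (n2 choose i) * e2 i * M1)"
      using sum.atLeastAtMost_rev[of "\<lambda>i. real (n2 choose i) * e2 i * M1" 0 k] by simp
    thus ?thesis by (simp add: atLeast0AtMost)
  qed
  have r1: "(\<Sum>j\<le>k. real (n1 choose j) * e1 j * M2) \<le> 2 * (2 * cosh l)^n1 * M2"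
    unfolding sum_distrib_right[symmetric] e1_def
    by (intro mult_right_mono chernoff l) (simp add: M2_def)
  have r2: "(\<Sum>i\<le>k. real (n2 choose i) * e2 i * M1) \<le> 2 * (2 * cosh l)^n2 * M1"
    unfolding sum_distrib_right[symmetric] e2_def
    by (intro mult_right_mono chernoff l) (simp add: M1_def)
  have "real (n choose k) * exp a = (\<Sum>j\<le>k. real (n1 choose j) * real (n2 choose (k - j)) * exp a)"
  proof -
    have vn: "(\<Sum>j\<le>k. (n1 choose j) * (n2 choose (k - j))) = n choose k"
      using vandermonde[of n1 n2 k] nn by simp
    have vr: "real (n choose k) = (\<Sum>j\<le>k. real (n1 choose j) * real (n2 choose (k - j)))"
      unfolding vn[symmetric] by simp
    show ?thesis unfolding vr by (simp add: sum_distrib_right)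
  qed
  also have "\<dots> \<le> (\<Sum>j\<le>k. real (n1 choose j) * real (n2 choose (k - j)) * (e1 j + e2 (k - j)))"
    by (intro sum_mono mult_left_mono pt) auto
  also have "\<dots> = (\<Sum>j\<le>k. real (n1 choose j) * e1 j * real (n2 choose (k - j)))
               + (\<Sum>j\<le>k. real (n2 choose (k - j)) * e2 (k - j) * real (n1 choose j))"
    by (simp add: sum.distrib[symmetric] algebra_simps)
  also have "\<dots> \<le> (\<Sum>j\<le>k. real (n1 choose j) * e1 j * M2)
               + (\<Sum>j\<le>k. real (n2 choose (k - j)) * e2 (k - j) * M1)"
    by (intro add_mono sum_mono mult_left_mono M1 M2) (auto simp: e1_def e2_def)
  also have "\<dots> \<le> 2 * (2 * cosh l)^n1 * M2 + 2 * (2 * cosh l)^n2 * M1"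
    using r0 r1 r2 by linarith
  also have "\<dots>
     = 2 * sqrt 2 * 2^n * (cosh l ^ n1 + cosh l ^ n2) / sqrt (real n + 1)"
    unfolding M1_def M2_def nn by (simp add: power_add power_mult_distrib field_simps)
  also have "\<dots> \<le> 2 * sqrt 2 * 2^n * (cosh l ^ n + cosh l ^ n) / sqrt (real n + 1)"
  proof -
    have c1: "cosh l ^ n1 \<le> cosh l ^ n" "cosh l ^ n2 \<le> cosh l ^ n"
      using nn cosh_real_ge_1[of l] by (intro power_increasing; simp)+
    show ?thesis using c1 by (intro divide_right_mono mult_left_mono add_mono) auto
  qed
  also have "\<dots> = 4 * sqrt 2 * 2^n * cosh l ^ n / sqrt (real n + 1)" by simp
  finally show ?thesis unfolding a_def .
qed



lemma exp_sums: "(\<lambda>n. x^n / fact n) sums exp (x::real)"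
  using exp_converges[of x] by (simp add: divide_inverse mult.commute)

lemma srw_nonneg: "srw_prob n z \<ge> 0"
  unfolding srw_prob_def by simp

lemma srw_bound:
  assumes l: "0 \<le> l"
  shows "srw_prob n z \<le> 4 * sqrt 2 * cosh l ^ n / sqrt (real n + 1) * exp (- (l * \<bar>real_of_int z\<bar> / 2))"
proof (cases "\<bar>z\<bar> \<le> int n \<and> even (int n + z)")
  case False
  have "srw_prob n z = 0" unfolding srw_prob_def by (rule if_not_P[OF False])
  moreover have "0 \<le> 4 * sqrt 2 * cosh l ^ n / sqrt (real n + 1) * exp (- (l * \<bar>real_of_int z\<bar> / 2))"
    using cosh_real_ge_1[of l] by simp
  ultimately show ?thesis by simp
next
  case True
  define k where "k = nat ((int n + z) div 2)"
  have k2: "2 * int k = int n + z" using True unfolding k_def by auto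
  have kn: "k \<le> n" using k2 True by linarith
  have zr: "real_of_int z = 2 * real k - real n"
  proof -
    have "real_of_int (2 * int k) = real_of_int (int n + z)" using k2 by simp
    thus ?thesis by simp
  qed
  have sp: "srw_prob n z = real (n choose k) / 2^n" unfolding srw_prob_def k_def using True by simp
  have "real (n choose k) * exp (l * \<bar>real_of_int z\<bar> / 2) \<le> 4 * sqrt 2 * 2^n * cosh l ^ n / sqrt (real n + 1)"
    unfolding zr by (rule split_bound[OF kn l])
  hence "real (n choose k) \<le> 4 * sqrt 2 * 2^n * cosh l ^ n / sqrt (real n + 1) * exp (- (l * \<bar>real_of_int z\<bar> / 2))"
    by (simp add: exp_minus field_simps)
  thus ?thesis unfolding sp by (simp add: field_simps)
qed

lemma srw_le: "srw_prob n z \<le> 4 * sqrt 2"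
proof -
  have "srw_prob n z \<le> 4 * sqrt 2 * cosh 0 ^ n / sqrt (real n + 1) * exp (- (0 * \<bar>real_of_int z\<bar> / 2))"
    by (rule srw_bound) simp
  also have "\<dots> = 4 * sqrt 2 / sqrt (real n + 1)" by simp
  also have "\<dots> \<le> 4 * sqrt 2" by (simp add: divide_le_eq)
  finally show ?thesis .
qed

definition pw :: "real \<Rightarrow> nat \<Rightarrow> real" where "pw t n = exp (- t) * t^n / fact n"

lemma pw_nonneg: "t \<ge> 0 \<Longrightarrow> pw t n \<ge> 0" unfolding pw_def by simp

lemma pw_sums: "(\<lambda>n. pw t n * c^n) sums (exp (- t) * exp (t * c))"
proof -
  have "(\<lambda>n. exp (- t) * ((t*c)^n / fact n)) sums (exp (- t) * exp (t * c))"
    by (intro sums_mult exp_sums)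
  thus ?thesis unfolding pw_def by (simp add: power_mult_distrib field_simps)
qed

lemma hk_summable: assumes "t \<ge> 0" shows "summable (\<lambda>n. pw t n * srw_prob n z)"
proof (rule summable_comparison_test')
  show "summable (\<lambda>n. pw t n * 1^n * (4 * sqrt 2))"
    using pw_sums[of t 1] by (intro summable_mult2) (auto simp: sums_iff)
  fix n
  show "norm (pw t n * srw_prob n z) \<le> pw t n * 1^n * (4 * sqrt 2)"
    using pw_nonneg[OF assms] srw_nonneg srw_le by (simp add: abs_mult mult_left_mono)
qed

lemma hk_sums: "t \<ge> 0 \<Longrightarrow> (\<lambda>n. pw t n * srw_prob n z) sums heat_kernel t z"
  unfolding heat_kernel_def pw_def[symmetric] by (rule summable_sums[OF hk_summable])

lemma hk_nonneg: assumes "t \<ge> 0" shows "heat_kernel t z \<ge> 0"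
proof (rule sums_le[OF _ sums_zero hk_sums[OF assms]])
  fix n show "0 \<le> pw t n * srw_prob n z" using assms by (intro mult_nonneg_nonneg pw_nonneg srw_nonneg)
qed

lemma div_le_self_real: "0 \<le> (X::real) \<Longrightarrow> 1 \<le> d \<Longrightarrow> X / d \<le> X"
  using divide_left_mono[of 1 d X] by simp

lemma hk_bound_a:
  assumes t: "t \<ge> 0" and l: "0 \<le> l"
  shows "heat_kernel t z \<le> 4 * sqrt 2 * exp (- (l * \<bar>real_of_int z\<bar> / 2)) * exp (t * (cosh l - 1))"
proof -
  define E where "E = exp (- (l * \<bar>real_of_int z\<bar> / 2))"
  have SS: "(\<lambda>n. 4 * sqrt 2 * E * (pw t n * cosh l ^ n)) sums (4 * sqrt 2 * E * (exp (- t) * exp (t * cosh l)))"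
    by (intro sums_mult pw_sums)
  have "pw t n * srw_prob n z \<le> 4 * sqrt 2 * E * (pw t n * cosh l ^ n)" for n
  proof -
    have "srw_prob n z \<le> 4 * sqrt 2 * cosh l ^ n / sqrt (real n + 1) * E"
      unfolding E_def by (rule srw_bound[OF l])
    also have "\<dots> = (4 * sqrt 2 * cosh l ^ n * E) / sqrt (real n + 1)" by simp
    also have "\<dots> \<le> 4 * sqrt 2 * cosh l ^ n * E"
      using cosh_real_ge_1[of l] by (intro div_le_self_real) (auto simp: E_def)
    finally have "srw_prob n z \<le> 4 * sqrt 2 * cosh l ^ n * E" .
    hence "pw t n * srw_prob n z \<le> pw t n * (4 * sqrt 2 * cosh l ^ n * E)"
      by (intro mult_left_mono pw_nonneg t)
    thus ?thesis by (simp add: algebra_simps)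
  qed
  hence "heat_kernel t z \<le> 4 * sqrt 2 * E * (exp (- t) * exp (t * cosh l))"
    by (rule sums_le[OF _ hk_sums[OF t] SS])
  also have "exp (- t) * exp (t * cosh l) = exp (t * (cosh l - 1))"
    by (simp add: exp_add[symmetric] algebra_simps)
  finally show ?thesis unfolding E_def .
qed

lemma amgm_pt:
  fixes a b s :: real
  assumes "s > 0" "a \<ge> 0" "b \<ge> 0"
  shows "a * b \<le> (a^2 / s + s * b^2) / 2"
proof -
  have "0 \<le> (a - s * b)^2 / s" using assms by simp
  also have "(a - s * b)^2 / s = a^2 / s + s * b^2 - 2 * a * b"
    using assms by (simp add: power2_eq_square field_simps)
  finally show ?thesis by simp
qed

lemma hk_bound_b:
  assumes t: "t > 0" and l: "0 \<le> l"
  shows "heat_kernel t z \<le> 4 * sqrt 2 * exp (- (l * \<bar>real_of_int z\<bar> / 2)) * ((1 + exp (t * (cosh l ^ 2 - 1))) / (2 * sqrt t))"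
proof -
  define E where "E = exp (- (l * \<bar>real_of_int z\<bar> / 2))"
  have E0: "E \<ge> 0" unfolding E_def by simp
  define s where "s = 1 / sqrt t"
  have s0: "s > 0" unfolding s_def using t by simp
  have f1: "(\<lambda>n. t^(n+1) / fact (n+1)) sums (exp t - 1)"
    using exp_sums[of t] sums_Suc_iff[of "\<lambda>n. t^n / fact n" "exp t - 1"] by simp
  have f1': "(\<lambda>n. exp (-t) * (t^(n+1) / fact (n+1)) / (t * s)) sums (exp (-t) * (exp t - 1) / (t * s))"
    by (intro sums_divide sums_mult f1)
  have f1e: "exp (-t) * (t^(n+1) / fact (n+1)) / (t * s) = pw t n * (1 / (real n + 1) / s)" for n
  proof -
    have F: "fact n > (0::real)" by simp
    have N: "real n + 1 > 0" by simp
    have fs: "fact (n+1) = (real n + 1) * (fact n :: real)" by (simp add: fact_Suc)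
    have gen: "e * (t * T / (N * F)) / (t * s) = e * T / F * (1 / N / s)"
      if "t \<noteq> 0" "N \<noteq> 0" "F \<noteq> 0" "s \<noteq> 0" for e t T N F s :: real
      using that by (simp add: field_simps)
    show ?thesis unfolding pw_def fs power_Suc[of t n, unfolded Suc_eq_plus1]
      using t s0 F N by (intro gen) auto
  qed
  have f2: "(\<lambda>n. s * (pw t n * (cosh l ^ 2)^n)) sums (s * (exp (- t) * exp (t * cosh l ^ 2)))"
    by (intro sums_mult pw_sums)
  have F: "(\<lambda>n. 4 * sqrt 2 * E * ((pw t n * (1 / (real n + 1) / s) + s * (pw t n * (cosh l ^ 2)^n)) / 2))
     sums (4 * sqrt 2 * E * ((exp (-t) * (exp t - 1) / (t * s) + s * (exp (- t) * exp (t * cosh l ^ 2))) / 2))"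
    by (intro sums_mult sums_divide sums_add f2 f1'[unfolded f1e])
  have "pw t n * srw_prob n z \<le> 4 * sqrt 2 * E * ((pw t n * (1 / (real n + 1) / s) + s * (pw t n * (cosh l ^ 2)^n)) / 2)" for n
  proof -
    have am: "(1 / sqrt (real n + 1)) * cosh l ^ n \<le> ((1 / sqrt (real n + 1))^2 / s + s * (cosh l ^ n)^2) / 2"
      using cosh_real_ge_1[of l] by (intro amgm_pt s0) auto
    have am': "cosh l ^ n / sqrt (real n + 1) \<le> (1 / (real n + 1) / s + s * (cosh l ^ 2)^n) / 2"
      using am by (simp add: power_divide power_mult[symmetric] mult.commute)
    have "srw_prob n z \<le> 4 * sqrt 2 * E * (cosh l ^ n / sqrt (real n + 1))"
      using srw_bound[OF l, of n z] unfolding E_def by (simp add: field_simps)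
    also have "\<dots> \<le> 4 * sqrt 2 * E * ((1 / (real n + 1) / s + s * (cosh l ^ 2)^n) / 2)"
      using am' E0 by (intro mult_left_mono) auto
    finally have "pw t n * srw_prob n z \<le> pw t n * (4 * sqrt 2 * E * ((1 / (real n + 1) / s + s * (cosh l ^ 2)^n) / 2))"
      using pw_nonneg[of t n] t by (intro mult_left_mono) auto
    moreover have "p * (K * ((a + s * b) / 2)) = K * ((p * a + s * (p * b)) / 2)" for p K a s b :: real
      by (simp add: algebra_simps)
    ultimately show ?thesis by (simp only:)
  qed
  hence "heat_kernel t z \<le> 4 * sqrt 2 * E * ((exp (-t) * (exp t - 1) / (t * s) + s * (exp (- t) * exp (t * cosh l ^ 2))) / 2)"
    by (rule sums_le[OF _ hk_sums[of t z] F]) (use t in auto)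
  also have "\<dots> \<le> 4 * sqrt 2 * E * ((1 + exp (t * (cosh l ^ 2 - 1))) / (2 * sqrt t))"
  proof -
    have st: "sqrt t * sqrt t = t" using t by simp
    have a1: "exp (-t) * (exp t - 1) / (t * s) \<le> 1 / sqrt t"
    proof -
      have "exp (-t) * (exp t - 1) = 1 - exp (-t)" by (simp add: algebra_simps exp_minus)
      hence "exp (-t) * (exp t - 1) \<le> 1" by simp
      moreover have "t * s = sqrt t" unfolding s_def using st t by (simp add: field_simps)
      ultimately show ?thesis using t by (simp add: divide_right_mono)
    qed
    have a2: "s * (exp (- t) * exp (t * cosh l ^ 2)) = exp (t * (cosh l ^ 2 - 1)) / sqrt t"
      unfolding s_def by (simp add: exp_add[symmetric] algebra_simps)
    have "(exp (-t) * (exp t - 1) / (t * s) + s * (exp (- t) * exp (t * cosh l ^ 2))) / 2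
          \<le> (1 + exp (t * (cosh l ^ 2 - 1))) / (2 * sqrt t)"
    proof -
      have "(exp (-t) * (exp t - 1) / (t * s) + s * (exp (- t) * exp (t * cosh l ^ 2))) / 2
         \<le> (1 / sqrt t + s * (exp (- t) * exp (t * cosh l ^ 2))) / 2"
        by (rule divide_right_mono[OF add_right_mono[OF a1]]) simp
      also have "\<dots> = (1 + exp (t * (cosh l ^ 2 - 1))) / (2 * sqrt t)"
        unfolding a2 by (simp add: add_divide_distrib)
      finally show ?thesis .
    qed
    thus ?thesis using E0 by (intro mult_left_mono) auto
  qed
  finally show ?thesis unfolding E_def .
qed



lemma sinh_le_x_cosh:
  fixes x :: real assumes "0 \<le> x" shows "sinh x \<le> x * cosh x"
proof -
  have "0 * cosh 0 - sinh 0 \<le> x * cosh x - sinh x"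
  proof (rule DERIV_nonneg_imp_nondecreasing[OF assms])
    fix y :: real assume y: "0 \<le> y" "y \<le> x"
    have "((\<lambda>x. x * cosh x - sinh x) has_real_derivative (y * sinh y)) (at y)"
      by (auto intro!: derivative_eq_intros)
    moreover have "y * sinh y \<ge> 0" using y by simp
    ultimately show "\<exists>d. ((\<lambda>x. x * cosh x - sinh x) has_real_derivative d) (at y) \<and> 0 \<le> d" by blast
  qed
  thus ?thesis by simp
qed

lemma aux_half: fixes a X Y :: real shows "1 \<le> a \<Longrightarrow> X \<le> Y \<Longrightarrow> 0 \<le> X \<Longrightarrow> (1 + X) / 2 \<le> a + Y"
  by (simp add: field_simps)

definition KB :: "real \<Rightarrow> real" where
  "KB B = 4 * sqrt 2 * (exp (cosh (2 * B)) + exp (4 * B^2 * cosh (2 * B)^2))"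

lemma KB_nonneg: "KB B \<ge> 0" unfolding KB_def by simp

lemma min1_pos: "min1_invsqrt t > 0" "min1_invsqrt t \<le> 1"
  unfolding min1_invsqrt_def by auto

lemma hk_main:
  assumes t: "t \<ge> 0" and B: "B \<ge> 0"
  shows "heat_kernel t z \<le> KB B * min1_invsqrt t * exp (- (B * min1_invsqrt t * \<bar>real_of_int z\<bar>))"
proof (cases "t \<le> 1")
  case True
  hence m: "min1_invsqrt t = 1" unfolding min1_invsqrt_def by simp
  have "heat_kernel t z \<le> 4 * sqrt 2 * exp (- (2 * B * \<bar>real_of_int z\<bar> / 2)) * exp (t * (cosh (2 * B) - 1))"
    using hk_bound_a[OF t, of "2 * B" z] B by simp
  also have "\<dots> \<le> 4 * sqrt 2 * exp (- (2 * B * \<bar>real_of_int z\<bar> / 2)) * exp (cosh (2 * B))"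
  proof -
    have c: "cosh (2 * B) - 1 \<ge> 0" using cosh_real_ge_1[of "2*B"] by simp
    have "t * (cosh (2 * B) - 1) \<le> 1 * (cosh (2 * B) - 1)" using True c by (intro mult_right_mono) auto
    hence "t * (cosh (2 * B) - 1) \<le> cosh (2 * B)" by simp
    thus ?thesis by (intro mult_left_mono) auto
  qed
  also have "\<dots> \<le> KB B * min1_invsqrt t * exp (- (B * min1_invsqrt t * \<bar>real_of_int z\<bar>))"
    unfolding m KB_def by (simp add: mult_left_mono)
  finally show ?thesis .
next
  case False
  hence t1: "t > 1" by simp
  hence m: "min1_invsqrt t = 1 / sqrt t" unfolding min1_invsqrt_def by simp
  define l where "l = 2 * B / sqrt t"
  have st: "sqrt t > 1" using t1 by simp
  have l0: "0 \<le> l" unfolding l_def using B t by simp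
  have l2: "l \<le> 2 * B" unfolding l_def using B st by (simp add: divide_le_eq mult_le_cancel_left1)
  have tl: "t * l^2 = 4 * B^2" unfolding l_def using t1 by (simp add: power_divide field_simps)
  have "t * (cosh l ^ 2 - 1) = t * sinh l ^ 2" by (simp add: sinh_square_eq)
  also have "\<dots> \<le> t * (l * cosh l)^2"
    using sinh_le_x_cosh[OF l0] l0 t by (intro mult_left_mono power_mono) auto
  also have "\<dots> = 4 * B^2 * cosh l ^ 2" using tl by (simp add: power_mult_distrib)
  also have "\<dots> \<le> 4 * B^2 * cosh (2 * B) ^ 2"
    using l0 l2 B by (intro mult_left_mono power_mono) (auto simp: cosh_real_nonneg_le_iff)
  finally have ex: "t * (cosh l ^ 2 - 1) \<le> 4 * B^2 * cosh (2 * B) ^ 2" .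
  have "heat_kernel t z \<le> 4 * sqrt 2 * exp (- (l * \<bar>real_of_int z\<bar> / 2)) * ((1 + exp (t * (cosh l ^ 2 - 1))) / (2 * sqrt t))"
    using hk_bound_b[OF _ l0] t1 by simp
  also have "\<dots> \<le> 4 * sqrt 2 * exp (- (l * \<bar>real_of_int z\<bar> / 2)) * ((exp (cosh (2 * B)) + exp (4 * B^2 * cosh (2 * B)^2)) / sqrt t)"
  proof -
    have "1 \<le> exp (cosh (2 * B))" using cosh_real_ge_1[of "2*B"] by simp
    moreover have "exp (t * (cosh l ^ 2 - 1)) \<le> exp (4 * B^2 * cosh (2 * B)^2)" using ex by simp
    ultimately have "(1 + exp (t * (cosh l ^ 2 - 1))) / 2 \<le> exp (cosh (2 * B)) + exp (4 * B^2 * cosh (2 * B)^2)"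
      by (rule aux_half[OF _ _ exp_ge_zero])
    hence "(1 + exp (t * (cosh l ^ 2 - 1))) / 2 / sqrt t \<le> (exp (cosh (2 * B)) + exp (4 * B^2 * cosh (2 * B)^2)) / sqrt t"
      using st by (intro divide_right_mono) auto
    thus ?thesis by (intro mult_left_mono) (auto simp: divide_divide_eq_left mult.commute)
  qed
  also have "\<dots> = KB B * min1_invsqrt t * exp (- (B * min1_invsqrt t * \<bar>real_of_int z\<bar>))"
    unfolding m KB_def l_def by (simp add: field_simps)
  finally show ?thesis .
qed

lemma geom_tail:
  fixes f :: "nat \<Rightarrow> real"
  assumes f0: "\<And>k. 0 \<le> f k" and fD: "\<And>k. f k \<le> D * r^k" and r: "0 \<le> r" "r < 1"
  shows "summable f" "suminf f \<le> D / (1 - r)"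
proof -
  have g: "(\<lambda>k. D * r^k) sums (D * (1 / (1 - r)))"
    using r by (intro sums_mult geometric_sums) auto
  show sf: "summable f"
    by (rule summable_comparison_test'[of "\<lambda>k. D * r^k"]) (use g f0 fD in \<open>auto simp: sums_iff\<close>)
  have "suminf f \<le> D * (1 / (1 - r))"
    using sums_le[OF fD summable_sums[OF sf] g] .
  thus "suminf f \<le> D / (1 - r)" by simp
qed



lemma core:
  fixes A T b eps t :: real and x y :: nat
  assumes T: "T > 0" and b: "b \<ge> 0" and e: "0 < eps" "eps \<le> 1" "eps \<le> sqrt T" "\<bar>A\<bar> * eps \<le> 1/2"
     and t: "0 \<le> t" "t \<le> T / eps^2"
  shows "robin_kernel A eps t x y \<le> KB (b + sqrt T * (\<bar>A\<bar>+1)) * (3 + 6*\<bar>A\<bar>) * min1_invsqrt t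
            * exp (- b * \<bar>real x - real y\<bar> * min1_invsqrt t)"
proof -
  define B where "B = b + sqrt T * (\<bar>A\<bar>+1)"
  define K where "K = KB B"
  define m where "m = min1_invsqrt t"
  define E where "E = exp (- b * \<bar>real x - real y\<bar> * m)"
  define mu where "mu = muA A eps"
  have B0: "B \<ge> 0" "B \<ge> b" unfolding B_def using b T by auto
  have K0: "K \<ge> 0" unfolding K_def by (rule KB_nonneg)
  have m0: "m > 0" "m \<le> 1" unfolding m_def using min1_pos by auto
  have E0: "E \<ge> 0" unfolding E_def by simp
  have KmE0: "K * m * E \<ge> 0" using K0 m0 E0 by simp
  have mT: "eps \<le> m * sqrt T"
  proof (cases "t \<le> 1")
    case True
    then show ?thesis unfolding m_def min1_invsqrt_def using e by simp
  next
    case False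
    hence mm: "m = 1 / sqrt t" unfolding m_def min1_invsqrt_def by simp
    have "eps^2 * t \<le> T" using t e by (simp add: field_simps)
    hence "sqrt (eps^2 * t) \<le> sqrt T" by (rule real_sqrt_le_mono)
    hence "eps * sqrt t \<le> sqrt T" using e by (simp add: real_sqrt_mult)
    thus ?thesis unfolding mm using False by (simp add: field_simps)
  qed
  have hkb: "heat_kernel t z \<le> K * m * exp (- (B * m * \<bar>real_of_int z\<bar>))" for z
    unfolding K_def m_def by (rule hk_main[OF t(1) B0(1)])
  have hkE: "heat_kernel t z \<le> K * m * E" if "\<bar>real x - real y\<bar> \<le> \<bar>real_of_int z\<bar>" for z
  proof -
    have "b * m * \<bar>real x - real y\<bar> \<le> B * m * \<bar>real_of_int z\<bar>"
      using that B0 m0 b by (intro mult_mono) auto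
    hence "exp (- (B * m * \<bar>real_of_int z\<bar>)) \<le> E" unfolding E_def by (simp add: algebra_simps)
    hence "K * m * exp (- (B * m * \<bar>real_of_int z\<bar>)) \<le> K * m * E" using K0 m0 by (intro mult_left_mono) auto
    thus ?thesis using hkb[of z] by linarith
  qed
  have T1: "heat_kernel t (int x - int y) \<le> K * m * E" by (rule hkE) simp
  have Ae1: "A * eps \<le> \<bar>A\<bar> * eps" using e by (intro mult_right_mono) auto
  have Ae2: "(- A) * eps \<le> \<bar>A\<bar> * eps" using e by (intro mult_right_mono) auto
  have mu_lo: "mu \<ge> 1/2" unfolding mu_def muA_def using e(4) Ae1 by linarith
  have mu_hi: "mu \<le> 1 + \<bar>A\<bar> * eps" unfolding mu_def muA_def using Ae2 by simp
  have T2: "mu * heat_kernel t (int x + int y + 1) \<le> 2 * (K * m * E)"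
  proof -
    have h0: "heat_kernel t (int x + int y + 1) \<ge> 0" by (rule hk_nonneg[OF t(1)])
    have h1: "heat_kernel t (int x + int y + 1) \<le> K * m * E" by (rule hkE) simp
    have "mu * heat_kernel t (int x + int y + 1) \<le> 2 * heat_kernel t (int x + int y + 1)"
      using mu_hi e h0 by (intro mult_right_mono) auto
    thus ?thesis using h1 by linarith
  qed
  define r where "r = mu * exp (- ((B - b) * m))"
  have r0: "r \<ge> 0" unfolding r_def using mu_lo by simp
  have r1: "r \<le> exp (- eps)"
  proof -
    have "mu \<le> exp (\<bar>A\<bar> * eps)" using mu_hi exp_ge_add_one_self[of "\<bar>A\<bar> * eps"] by linarith
    moreover have "exp (- ((B - b) * m)) \<le> exp (- ((\<bar>A\<bar> + 1) * eps))"
    proof -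
      have "(\<bar>A\<bar> + 1) * eps \<le> (\<bar>A\<bar> + 1) * (m * sqrt T)" using mT by (intro mult_left_mono) auto
      thus ?thesis unfolding B_def by (simp add: algebra_simps)
    qed
    ultimately have "r \<le> exp (\<bar>A\<bar> * eps) * exp (- ((\<bar>A\<bar> + 1) * eps))"
      unfolding r_def by (intro mult_mono) auto
    also have "\<dots> = exp (- eps)" by (simp add: exp_add[symmetric] algebra_simps)
    finally show ?thesis .
  qed
  have r_eps: "1 - r \<ge> eps / 2"
  proof -
    have "exp eps \<ge> 1 + eps" by simp
    hence "exp (- eps) \<le> 1 / (1 + eps)" using e by (simp add: exp_minus field_simps)
    also have "1 / (1 + eps) \<le> 1 - eps / 2" using e by (simp add: field_simps)
    finally show ?thesis using r1 by linarith
  qed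
  define f where "f k = heat_kernel t (int x + int y + int k + 2) * mu ^ (k + 2)" for k
  define D where "D = K * m * E * mu^2"
  have f0: "f k \<ge> 0" for k unfolding f_def using hk_nonneg[OF t(1)] mu_lo by simp
  have fD: "f k \<le> D * r^k" for k
  proof -
    define s where "s = real x + real y + real k + 2"
    have zs: "\<bar>real_of_int (int x + int y + int k + 2)\<bar> = s" unfolding s_def by simp
    have "b * m * \<bar>real x - real y\<bar> + (B - b) * m * real k \<le> b * m * s + (B - b) * m * s"
      using b B0 m0 unfolding s_def by (intro add_mono mult_left_mono) auto
    also have "\<dots> = B * m * s" by (simp add: algebra_simps)
    finally have ex: "exp (- (B * m * s)) \<le> E * exp (- ((B - b) * m)) ^ k"
      unfolding E_def by (simp add: exp_of_nat_mult[symmetric] exp_add[symmetric] algebra_simps)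
    have "heat_kernel t (int x + int y + int k + 2) \<le> K * m * (E * exp (- ((B - b) * m)) ^ k)"
    proof -
      have "K * m * exp (- (B * m * s)) \<le> K * m * (E * exp (- ((B - b) * m)) ^ k)"
        using ex K0 m0 by (intro mult_left_mono) auto
      thus ?thesis using hkb[of "int x + int y + int k + 2"] unfolding zs by linarith
    qed
    hence "f k \<le> K * m * (E * exp (- ((B - b) * m)) ^ k) * mu ^ (k + 2)"
      unfolding f_def using mu_lo by (intro mult_right_mono) auto
    also have "\<dots> = D * r^k" unfolding D_def r_def by (simp add: power_add power_mult_distrib power2_eq_square algebra_simps)
    finally show ?thesis .
  qed
  have "exp (- eps) < 1" using e by simp
  hence rl1: "r < 1" using r1 by linarith
  note gt = geom_tail[OF f0 fD r0 rl1]
  have D0: "D \<ge> 0" unfolding D_def using KmE0 by simp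
  have S_le: "suminf f \<le> D * (2 / eps)"
  proof -
    have "D / (1 - r) \<le> D / (eps / 2)" using D0 r_eps e by (intro divide_left_mono) auto
    thus ?thesis using gt(2) by simp
  qed
  have S0: "suminf f \<ge> 0" using gt(1) f0 by (simp add: suminf_nonneg)
  have mup: "mu powi (-2) = inverse (mu^2)" by (simp add: power_int_minus)
  have mu2: "\<bar>mu^2 - 1\<bar> \<le> 3 * \<bar>A\<bar> * eps"
  proof -
    have "mu^2 - 1 = A * eps * (A * eps - 2)" unfolding mu_def muA_def by (simp add: power2_eq_square algebra_simps)
    hence "\<bar>mu^2 - 1\<bar> = \<bar>A\<bar> * eps * \<bar>A * eps - 2\<bar>" using e by (simp add: abs_mult)
    also have "\<dots> \<le> \<bar>A\<bar> * eps * 3"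
    proof -
      have "\<bar>A * eps\<bar> \<le> 1" using e by (simp add: abs_mult)
      hence "\<bar>A * eps - 2\<bar> \<le> 3" by linarith
      thus ?thesis using e by (intro mult_left_mono) auto
    qed
    finally show ?thesis by simp
  qed
  have T3: "(1 - mu powi (-2)) * suminf f \<le> 6 * \<bar>A\<bar> * (K * m * E)"
  proof -
    have "(1 - mu powi (-2)) * suminf f \<le> \<bar>1 - mu powi (-2)\<bar> * suminf f"
      using S0 by (intro mult_right_mono) auto
    also have "\<dots> \<le> \<bar>1 - mu powi (-2)\<bar> * (D * (2 / eps))"
      using S_le by (intro mult_left_mono) auto
    also have "\<dots> = \<bar>mu^2 - 1\<bar> * (K * m * E) * (2 / eps)"
    proof -
      have "mu \<noteq> 0" using mu_lo by auto
      hence "\<bar>1 - mu powi (-2)\<bar> * mu^2 = \<bar>mu^2 - 1\<bar>"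
        unfolding mup by (simp add: abs_mult[symmetric] field_simps)
      moreover have "\<bar>1 - mu powi (-2)\<bar> * (K * m * E * mu^2 * (2 / eps)) = (\<bar>1 - mu powi (-2)\<bar> * mu^2) * (K * m * E) * (2 / eps)"
        by (simp only: mult_ac)
      ultimately show ?thesis unfolding D_def by simp
    qed
    also have "\<dots> \<le> 3 * \<bar>A\<bar> * eps * (K * m * E) * (2 / eps)"
      using mu2 KmE0 e by (intro mult_right_mono) auto
    also have "\<dots> = 6 * \<bar>A\<bar> * (K * m * E)" using e by (simp add: field_simps)
    finally show ?thesis .
  qed
  have "robin_kernel A eps t x y = heat_kernel t (int x - int y) + mu * heat_kernel t (int x + int y + 1)
          + (1 - mu powi (-2)) * suminf f"
    unfolding robin_kernel_def mu_def f_def by simp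
  also have "\<dots> \<le> K * m * E + 2 * (K * m * E) + 6 * \<bar>A\<bar> * (K * m * E)"
    using T1 T2 T3 by linarith
  also have "\<dots> = KB (b + sqrt T * (\<bar>A\<bar>+1)) * (3 + 6*\<bar>A\<bar>) * min1_invsqrt t
            * exp (- b * \<bar>real x - real y\<bar> * min1_invsqrt t)"
    unfolding K_def B_def m_def E_def by (simp add: algebra_simps)
  finally show ?thesis .
qed

theorem mainTheorem4:
  fixes A T b :: real
  assumes "T > 0" and "b \<ge> 0"
  shows "\<exists>C. \<exists>\<epsilon>0 > 0. \<forall>\<epsilon>. 0 < \<epsilon> \<and> \<epsilon> < \<epsilon>0 \<longrightarrow>
           (\<forall>t x y. 0 \<le> t \<and> t \<le> T / \<epsilon>\<^sup>2 \<longrightarrow>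
              robin_kernel A \<epsilon> t x y
                \<le> C * min1_invsqrt t * exp (- b * \<bar>real x - real y\<bar> * min1_invsqrt t))"
proof -
  define e0 where "e0 = min (min 1 (sqrt T)) (1 / (2 * \<bar>A\<bar> + 2))"
  have e0p: "e0 > 0" unfolding e0_def using assms by simp
  show ?thesis
  proof (rule exI[of _ "KB (b + sqrt T * (\<bar>A\<bar>+1)) * (3 + 6*\<bar>A\<bar>)"], rule exI[of _ e0], intro conjI allI impI e0p)
    fix eps t :: real and x y :: nat
    assume ep: "0 < eps \<and> eps < e0" and tt: "0 \<le> t \<and> t \<le> T / eps\<^sup>2"
    have e1: "eps \<le> 1" "eps \<le> sqrt T" using ep unfolding e0_def by auto
    have "eps \<le> 1 / (2 * \<bar>A\<bar> + 2)" using ep unfolding e0_def by auto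
    hence "eps * (2 * \<bar>A\<bar> + 2) \<le> 1" by (simp add: field_simps)
    hence e2: "\<bar>A\<bar> * eps \<le> 1/2" using ep by (simp add: algebra_simps)
    show "robin_kernel A eps t x y \<le> KB (b + sqrt T * (\<bar>A\<bar>+1)) * (3 + 6*\<bar>A\<bar>) * min1_invsqrt t
            * exp (- b * \<bar>real x - real y\<bar> * min1_invsqrt t)"
      using core[OF assms _ e1 e2, of t x y] ep tt by auto
  qed
qed


end
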